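(* Let $H$ be a countable group and $E$ a normal subgroup of $H$. Let $H\curvearrowright X$ be a Borel action on a standard Borel space such that $E$ acts on $X$ trivially. Set $\mathcal{H}=X\rtimes H$ and $\mathcal{R}=\mathcal{R}(H/E\curvearrowright X)$, and let $q\colon\mathcal{H}\to\mathcal{R}$ be the quotient map $(x,h)\mapsto(x,h^{-1}x)$. Suppose that $\mathcal{R}$ is hyperfinite. Then the exact sequence of groupoids \[1\to X\times E\to\mathcal{H}\xrightarrow{q}\mathcal{R}\to1\] splits, i.e. there exists a Borel homomorphism $\sigma\colon\mathcal{R}\to\mathcal{H}$ which is a section of $q$.
   Context: $X\rtimes H$ is the groupoid on $X\times H$ with unit space $X$, range $(x,h)\mapsto x$, source $(x,h)\mapsto h^{-1}x$, product $(x,h)(h^{-1}x,k)=(x,hk)$. $\mathcal{R}(H/E\curvearrowright X)=\{(x,h^{-1}x):x\in X,h\in H\}$ is the orbit equivalence relation, a groupoid with $r(x,y)=x$, $s(x,y)=y$, $(x,y)(y,z)=(x,z)$. A countable Borel equivalence relation is hyperfinite if it is an increasing union of Borel equivalence relations with finite classes. *)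

theory Defs
  imports "HOL-Analysis.Analysis" "HOL-Algebra.Group_Action" "HOL-Algebra.Coset"
begin

text \<open>Transformation groupoid X \<rtimes> H on X \<times> H (with X = UNIV of a Polish type).
  range (x,h) = x, source (x,h) = h^-1 x, product (x,h)(h^-1 x,k) = (x, h k).\<close>

definition ag_range :: "('x \<times> 'g) \<Rightarrow> 'x" where
  "ag_range g = fst g"

definition ag_source :: "('g, 'm) monoid_scheme \<Rightarrow> ('g \<Rightarrow> 'x \<Rightarrow> 'x) \<Rightarrow> ('x \<times> 'g) \<Rightarrow> 'x" where
  "ag_source H act g = act (inv\<^bsub>H\<^esub> (snd g)) (fst g)"

definition ag_mult :: "('g, 'm) monoid_scheme \<Rightarrow> ('x \<times> 'g) \<Rightarrow> ('x \<times> 'g) \<Rightarrow> ('x \<times> 'g)" where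
  "ag_mult H g k = (fst g, snd g \<otimes>\<^bsub>H\<^esub> snd k)"

definition action_groupoid :: "('g, 'm) monoid_scheme \<Rightarrow> ('x \<times> 'g) set" where
  "action_groupoid H = UNIV \<times> carrier H"

text \<open>Orbit equivalence relation R(H/E acting on X) = {(x, h^-1 x)}; groupoid with
  r(x,y)=x, s(x,y)=y, (x,y)(y,z)=(x,z).\<close>

definition orbit_rel :: "('g, 'm) monoid_scheme \<Rightarrow> ('g \<Rightarrow> 'x \<Rightarrow> 'x) \<Rightarrow> ('x \<times> 'x) set" where
  "orbit_rel H act = {(x, act (inv\<^bsub>H\<^esub> h) x) | x h. h \<in> carrier H}"

definition quot_map :: "('g, 'm) monoid_scheme \<Rightarrow> ('g \<Rightarrow> 'x \<Rightarrow> 'x) \<Rightarrow> ('x \<times> 'g) \<Rightarrow> ('x \<times> 'x)" where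
  "quot_map H act g = (fst g, act (inv\<^bsub>H\<^esub> (snd g)) (fst g))"

definition groupoid_hom_rel_ag ::
  "('g, 'm) monoid_scheme \<Rightarrow> ('g \<Rightarrow> 'x \<Rightarrow> 'x) \<Rightarrow> ('x \<times> 'x) set \<Rightarrow> (('x \<times> 'x) \<Rightarrow> ('x \<times> 'g)) \<Rightarrow> bool" where
  "groupoid_hom_rel_ag H act R \<sigma> \<longleftrightarrow>
     (\<forall>p \<in> R. \<sigma> p \<in> action_groupoid H) \<and>
     (\<forall>x y z. (x, y) \<in> R \<longrightarrow> (y, z) \<in> R \<longrightarrow>
        ag_source H act (\<sigma> (x, y)) = ag_range (\<sigma> (y, z)) \<and>
        \<sigma> (x, z) = ag_mult H (\<sigma> (x, y)) (\<sigma> (y, z)))"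

definition hyperfinite :: "('x::topological_space \<times> 'x) set \<Rightarrow> bool" where
  "hyperfinite R \<longleftrightarrow>
     (\<exists>F :: nat \<Rightarrow> ('x \<times> 'x) set.
        incseq F \<and> (\<Union>n. F n) = R \<and>
        (\<forall>n. F n \<in> sets (borel \<Otimes>\<^sub>M borel) \<and> equiv UNIV (F n) \<and>
             (\<forall>x. finite (F n `` {x}))))"

end

theory Submission
  imports Defs
begin


definition lexlt :: "(nat \<Rightarrow> 'x set) \<Rightarrow> 'x \<Rightarrow> 'x \<Rightarrow> bool" where
  "lexlt B x y \<longleftrightarrow> (\<exists>i. (\<forall>j<i. (x \<in> B j \<longleftrightarrow> y \<in> B j)) \<and> x \<notin> B i \<and> y \<in> B i)"

lemma lexlt_irrefl: "\<not> lexlt B x x" unfolding lexlt_def by auto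

lemma lexlt_trans: assumes "lexlt B x y" "lexlt B y z" shows "lexlt B x z"
proof -
  obtain i where i: "\<forall>j<i. (x \<in> B j \<longleftrightarrow> y \<in> B j)" "x \<notin> B i" "y \<in> B i"
    using assms(1) unfolding lexlt_def by blast
  obtain k where k: "\<forall>j<k. (y \<in> B j \<longleftrightarrow> z \<in> B j)" "y \<notin> B k" "z \<in> B k"
    using assms(2) unfolding lexlt_def by blast
  consider "i < k" | "k < i" | "i = k" by linarith
  then show ?thesis
  proof cases
    case 1 then show ?thesis unfolding lexlt_def using i k
      by (intro exI[of _ i]) auto
  next
    case 2 then show ?thesis unfolding lexlt_def using i k
      by (intro exI[of _ k]) auto
  next
    case 3 then show ?thesis using i k by auto
  qed
qed

lemma lexlt_total:
  assumes sep: "\<exists>i. (x \<in> B i) \<noteq> (y \<in> B i)"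
  shows "lexlt B x y \<or> lexlt B y x"
proof -
  define i where "i = (LEAST i. (x \<in> B i) \<noteq> (y \<in> B i))"
  have a: "(x \<in> B i) \<noteq> (y \<in> B i)" unfolding i_def by (rule LeastI_ex[OF sep])
  have b: "\<forall>j<i. (x \<in> B j \<longleftrightarrow> y \<in> B j)" unfolding i_def using not_less_Least by blast
  show ?thesis
  proof (cases "x \<in> B i")
    case True then show ?thesis using a b unfolding lexlt_def by (intro disjI2 exI[of _ i]) auto
  next
    case False then show ?thesis using a b unfolding lexlt_def by (intro disjI1 exI[of _ i]) auto
  qed
qed

lemma lexlt_min_ex:
  assumes "finite S" "S \<noteq> {}"
  shows "\<exists>m\<in>S. \<forall>y\<in>S. \<not> lexlt B y m"
  using assms
proof (induction S rule: finite_induct)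
  case empty then show ?case by simp
next
  case (insert a S)
  show ?case
  proof (cases "S = {}")
    case True then show ?thesis using lexlt_irrefl[of B a] by auto
  next
    case False
    then obtain m where m: "m \<in> S" "\<forall>y\<in>S. \<not> lexlt B y m" using insert by blast
    show ?thesis
    proof (cases "lexlt B a m")
      case True
      then show ?thesis using m lexlt_irrefl lexlt_trans by (metis insert_iff)
    next
      case False then show ?thesis using m by auto
    qed
  qed
qed

lemma lexlt_min_unique:
  assumes sep: "\<And>x y. x \<noteq> y \<Longrightarrow> \<exists>i. (x \<in> B i) \<noteq> (y \<in> B i)"
    and "m \<in> S" "\<forall>y\<in>S. \<not> lexlt B y m" "m' \<in> S" "\<forall>y\<in>S. \<not> lexlt B y m'"
  shows "m = m'"
  using assms lexlt_total by metis

lemma mem_pred_aux[measurable]: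
  assumes "A \<in> sets borel" "f \<in> borel_measurable M"
  shows "Measurable.pred M (\<lambda>x. f x \<in> A)"
  by (rule pred_sets2[OF assms])

lemma lexlt_pred[measurable]:
  assumes [measurable]: "\<And>i. B i \<in> sets borel" "f \<in> borel_measurable M" "g \<in> borel_measurable M"
  shows "Measurable.pred M (\<lambda>x. lexlt B (f x) (g x))"
proof -
  have [measurable]: "Measurable.pred M (\<lambda>x. f x \<in> B j)" "Measurable.pred M (\<lambda>x. g x \<in> B j)" for j
    using assms by (auto intro: mem_pred_aux)
  show ?thesis unfolding lexlt_def by measurable
qed

lemma sep_basis_ex:
  "\<exists>B::nat \<Rightarrow> 'x::{second_countable_topology,t2_space} set. (\<forall>i. open (B i)) \<and>
      (\<forall>x y. x \<noteq> y \<longrightarrow> (\<exists>i. (x \<in> B i) \<noteq> (y \<in> B i)))"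
proof -
  obtain BB :: "'x set set" where BB: "countable BB" "topological_basis BB"
    using ex_countable_basis by blast
  have ne: "BB \<noteq> {}"
  proof
    assume "BB = {}"
    then show False using topological_basisE[OF BB(2) open_UNIV, of undefined] by auto
  qed
  define B where "B = from_nat_into BB"
  have "\<forall>i. open (B i)" unfolding B_def using from_nat_into[OF ne] BB(2) topological_basis_open by blast
  moreover have "\<exists>i. (x \<in> B i) \<noteq> (y \<in> B i)" if xy: "x \<noteq> y" for x y
  proof -
    obtain U where U: "open U" "x \<in> U" "y \<notin> U"
      using hausdorff[OF xy] by (metis disjoint_iff)
    obtain b where b: "b \<in> BB" "x \<in> b" "b \<subseteq> U" using topological_basisE[OF BB(2) U(1,2)] by blast
    obtain i where "from_nat_into BB i = b" using from_nat_into_surj[OF BB(1) b(1)] by blast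
    then show ?thesis using b U unfolding B_def by auto
  qed
  ultimately show ?thesis by blast
qed




locale hf =
  fixes H (structure) and act :: "'g \<Rightarrow> 'x::polish_space \<Rightarrow> 'x"
    and F :: "nat \<Rightarrow> ('x \<times> 'x) set" and B :: "nat \<Rightarrow> 'x set"
  assumes grp: "group H" and cnt: "countable (carrier H)" and ga: "group_action H UNIV act"
    and actm: "\<And>h. h \<in> carrier H \<Longrightarrow> act h \<in> borel_measurable borel"
    and inc: "incseq F" and un: "(\<Union>n. F n) = orbit_rel H act"
    and Fm: "\<And>n. F n \<in> sets (borel \<Otimes>\<^sub>M borel)" and Feq: "\<And>n. equiv UNIV (F n)"
    and Ffin: "\<And>n x. finite (F n `` {x})"
    and Bo: "\<And>i. open (B i)" and Bsep: "\<And>x y. x \<noteq> y \<Longrightarrow> \<exists>i. (x \<in> B i) \<noteq> (y \<in> B i)"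
begin

abbreviation "R \<equiv> orbit_rel H act"
definition "enum = from_nat_into (carrier H)"

lemma carr_ne: "carrier H \<noteq> {}"
  using monoid.one_closed[OF group.is_monoid[OF grp]] by blast

lemma enum_in[simp]: "enum i \<in> carrier H"
  unfolding enum_def using from_nat_into[OF carr_ne] .

lemma enum_surj: "g \<in> carrier H \<Longrightarrow> \<exists>i. enum i = g"
  unfolding enum_def using from_nat_into_surj[OF cnt] by blast

lemma act_mult: "g \<in> carrier H \<Longrightarrow> h \<in> carrier H \<Longrightarrow> act (g \<otimes> h) x = act g (act h x)"
  using group_action.composition_rule[OF ga] by blast

lemma act_one[simp]: "act \<one> x = x"
  using fun_cong[OF group_action.id_eq_one[OF ga], of x] by simp

lemma act_inv1[simp]: "g \<in> carrier H \<Longrightarrow> act (inv g) (act g x) = x"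
  using act_mult[of "inv g" g x] group.l_inv[OF grp] group.inv_closed[OF grp] by simp

lemma act_inv2[simp]: "g \<in> carrier H \<Longrightarrow> act g (act (inv g) x) = x"
  using act_mult[of g "inv g" x] group.r_inv[OF grp] group.inv_closed[OF grp] by simp

lemma F_R: "(x,y) \<in> F n \<Longrightarrow> (x,y) \<in> R"
  using un by blast

lemma R_orbit: "(x,y) \<in> R \<Longrightarrow> \<exists>k\<in>carrier H. y = act k x"
  unfolding orbit_rel_def using group.inv_closed[OF grp] by blast

lemma F_orbit: "(x,y) \<in> F n \<Longrightarrow> \<exists>i. y = act (enum i) x"
  using R_orbit[OF F_R] enum_surj by metis

lemma F_refl: "(x,x) \<in> F n"
  using Feq[of n] unfolding equiv_def refl_on_def by blast

lemma F_sym: "(x,y) \<in> F n \<Longrightarrow> (y,x) \<in> F n"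
  using Feq[of n] unfolding equiv_def by (meson symD)

lemma F_trans: "(x,y) \<in> F n \<Longrightarrow> (y,z) \<in> F n \<Longrightarrow> (x,z) \<in> F n"
  using Feq[of n] unfolding equiv_def by (meson transD)

lemma F_mono: "m \<le> n \<Longrightarrow> p \<in> F m \<Longrightarrow> p \<in> F n"
  using inc unfolding incseq_def by blast

definition "minF n x = (THE z. z \<in> F n``{x} \<and> (\<forall>y\<in>F n``{x}. \<not> lexlt B y z))"

lemma minF: "minF n x \<in> F n``{x} \<and> (\<forall>y\<in>F n``{x}. \<not> lexlt B y (minF n x))"
proof -
  have ne: "F n``{x} \<noteq> {}" using F_refl by blast
  obtain m where m: "m \<in> F n``{x}" "\<forall>y\<in>F n``{x}. \<not> lexlt B y m"
    using lexlt_min_ex[OF Ffin ne] by blast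
  have "\<exists>!z. z \<in> F n``{x} \<and> (\<forall>y\<in>F n``{x}. \<not> lexlt B y z)"
    using m lexlt_min_unique[OF Bsep] by blast
  then show ?thesis unfolding minF_def by (rule theI')
qed

lemma minF_eq: "(x,y) \<in> F n \<Longrightarrow> minF n x = minF n y"
  unfolding minF_def using equiv_class_eq[OF Feq] by metis

lemma minF_char:
  "minF n x = act g x \<longleftrightarrow> ((x, act g x) \<in> F n \<and>
      (\<forall>i. (x, act (enum i) x) \<in> F n \<longrightarrow> \<not> lexlt B (act (enum i) x) (act g x)))"
proof
  assume "minF n x = act g x"
  then show "((x, act g x) \<in> F n \<and>
      (\<forall>i. (x, act (enum i) x) \<in> F n \<longrightarrow> \<not> lexlt B (act (enum i) x) (act g x)))"
    using minF[of n x] by auto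
next
  assume a: "((x, act g x) \<in> F n \<and>
      (\<forall>i. (x, act (enum i) x) \<in> F n \<longrightarrow> \<not> lexlt B (act (enum i) x) (act g x)))"
  have "\<forall>y\<in>F n``{x}. \<not> lexlt B y (act g x)"
    using a F_orbit by blast
  then show "minF n x = act g x"
    using minF[of n x] a lexlt_min_unique[OF Bsep] by blast
qed

primrec T :: "nat \<Rightarrow> 'x \<Rightarrow> 'x" where
  "T 0 x = x" | "T (Suc n) x = minF n x"

lemma T_R: "(x, T n x) \<in> R"
proof (cases n)
  case 0
  have "(x, act (inv \<one>) x) \<in> R" unfolding orbit_rel_def using monoid.one_closed[OF group.is_monoid[OF grp]] by blast
  then show ?thesis using 0 monoid.inv_one[OF group.is_monoid[OF grp]] by simp
next
  case (Suc k) then show ?thesis using minF[of k x] F_R by auto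
qed

lemma T_inv: "(x,y) \<in> F m \<Longrightarrow> m < n \<Longrightarrow> T n x = T n y"
proof -
  assume a: "(x,y) \<in> F m" "m < n"
  then obtain k where k: "n = Suc k" "m \<le> k" by (cases n) auto
  then show ?thesis using minF_eq F_mono[OF k(2) a(1)] by simp
qed

definition "bidx n x = (LEAST i. act (inv (enum i)) (T n x) = T (Suc n) x)"
definition "b n x = enum (bidx n x)"

lemma b_prop: "act (inv (b n x)) (T n x) = T (Suc n) x"
proof -
  obtain k1 where k1: "k1 \<in> carrier H" "T n x = act k1 x" using R_orbit[OF T_R] by blast
  obtain k2 where k2: "k2 \<in> carrier H" "T (Suc n) x = act k2 x" using R_orbit[OF T_R] by blast
  interpret G: group H by (rule grp)
  have g: "k1 \<otimes> inv k2 \<in> carrier H" using k1 k2 by simp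
  have "act (inv (k1 \<otimes> inv k2)) (T n x) = T (Suc n) x"
    using k1 k2 by (simp add: G.inv_mult_group act_mult)
  then obtain i where "act (inv (enum i)) (T n x) = T (Suc n) x" using enum_surj[OF g] by metis
  then show ?thesis unfolding b_def bidx_def by (rule LeastI)
qed

lemma b_inv: "(x,y) \<in> F m \<Longrightarrow> m < n \<Longrightarrow> b n x = b n y"
  unfolding b_def bidx_def using T_inv[of x y m n] T_inv[of x y m "Suc n"] by simp

primrec a :: "nat \<Rightarrow> 'x \<Rightarrow> 'g" where
  "a 0 x = b 0 x" | "a (Suc n) x = a n x \<otimes> b (Suc n) x"

lemma a_carr[simp]: "a n x \<in> carrier H"
  by (induction n) (auto simp: b_def intro: monoid.m_closed[OF group.is_monoid[OF grp]])

lemma a_prop: "act (inv (a n x)) x = T (Suc n) x"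
proof (induction n)
  case 0 then show ?case using b_prop[of 0 x] by simp
next
  case (Suc n)
  interpret G: group H by (rule grp)
  have bc: "b (Suc n) x \<in> carrier H" by (simp add: b_def)
  have "act (inv (a (Suc n) x)) x = act (inv (b (Suc n) x)) (act (inv (a n x)) x)"
    using bc by (simp add: G.inv_mult_group act_mult)
  also have "\<dots> = T (Suc (Suc n)) x" using Suc b_prop[of "Suc n" x] by simp
  finally show ?case .
qed

definition "d n x y = a n x \<otimes> inv (a n y)"

lemma d_carr[simp]: "d n x y \<in> carrier H"
  unfolding d_def using grp by (simp add: group.inv_closed monoid.m_closed[OF group.is_monoid[OF grp]])

lemma d_stable: assumes xy: "(x,y) \<in> F m" and mn: "m \<le> n" shows "d n x y = d m x y"
  using mn
proof (induction n rule: dec_induct)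
  case base then show ?case by simp
next
  case (step n)
  interpret G: group H by (rule grp)
  have e: "b (Suc n) x = b (Suc n) y" using b_inv[OF xy] step by simp
  have bc: "b (Suc n) y \<in> carrier H" by (simp add: b_def)
  have "d (Suc n) x y = a n x \<otimes> (b (Suc n) y \<otimes> (inv (b (Suc n) y) \<otimes> inv (a n y)))"
    unfolding d_def using e bc by (simp add: G.inv_mult_group G.m_assoc)
  also have "\<dots> = d n x y" unfolding d_def using bc by (simp add: G.m_assoc[symmetric])
  finally show ?case using step by simp
qed

lemma d_act: "(x,y) \<in> F n \<Longrightarrow> act (inv (d n x y)) x = y"
proof -
  assume xy: "(x,y) \<in> F n"
  interpret G: group H by (rule grp)
  have "act (inv (d n x y)) x = act (a n y) (act (inv (a n x)) x)"
    unfolding d_def by (simp add: G.inv_mult_group act_mult)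
  also have "\<dots> = act (a n y) (T (Suc n) y)" using a_prop T_inv[OF xy, of "Suc n"] by simp
  also have "\<dots> = y" using a_prop[of n y, symmetric] by simp
  finally show ?thesis .
qed

lemma d_cocycle: "d n x z = d n x y \<otimes> d n y z"
proof -
  interpret G: group H by (rule grp)
  show ?thesis unfolding d_def by (simp add: G.m_assoc[symmetric]) (simp add: G.m_assoc)
qed

definition "c p = d (LEAST n. p \<in> F n) (fst p) (snd p)"

lemma c_eq: "(x,y) \<in> F n \<Longrightarrow> c (x,y) = d n x y"
proof -
  assume xy: "(x,y) \<in> F n"
  define N where "N = (LEAST n. (x,y) \<in> F n)"
  have "N \<le> n" unfolding N_def using xy by (rule Least_le)
  moreover have "(x,y) \<in> F N" unfolding N_def using xy by (rule LeastI)
  ultimately have "d n x y = d N x y" using d_stable by blast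
  moreover have "c (x,y) = d N x y" unfolding c_def N_def by simp
  ultimately show ?thesis by simp
qed


lemma act_meas[measurable]: "act (enum i) \<in> borel_measurable borel" "act (inv (enum i)) \<in> borel_measurable borel"
  using actm enum_in group.inv_closed[OF grp] by blast+

lemma B_sets[measurable]: "B i \<in> sets borel"
  using Bo by simp

lemma pairF_pred: assumes g: "g \<in> carrier H" shows "Measurable.pred borel (\<lambda>x. (x, act g x) \<in> F n)"
proof -
  have [measurable]: "act g \<in> borel_measurable borel" using actm[OF g] .
  have "(\<lambda>x. (x, act g x)) \<in> borel \<rightarrow>\<^sub>M borel \<Otimes>\<^sub>M borel" by measurable
  then show ?thesis by (rule pred_sets2[OF Fm])
qed

lemma minF_pred: assumes g: "g \<in> carrier H" shows "Measurable.pred borel (\<lambda>x. minF n x = act g x)"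
proof -
  have [measurable]: "act g \<in> borel_measurable borel" using actm[OF g] .
  have [measurable]: "Measurable.pred borel (\<lambda>x. (x, act g x) \<in> F n)" using pairF_pred[OF g] .
  have [measurable]: "Measurable.pred borel (\<lambda>x. (x, act (enum i) x) \<in> F n)" for i using pairF_pred[OF enum_in] .
  have [measurable]: "Measurable.pred borel (\<lambda>x. lexlt B (act (enum i) x) (act g x))" for i
    by (rule lexlt_pred) measurable
  show ?thesis unfolding minF_char by measurable
qed

lemma T_meas[measurable]: "T n \<in> borel_measurable borel"
proof (cases n)
  case 0
  have "T 0 = (\<lambda>x. x)" by (simp add: fun_eq_iff)
  then show ?thesis using 0 by simp
next
  case (Suc k)
  have ex: "\<exists>i. minF k x = act (enum i) x" for x using minF[of k x] F_orbit by blast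
  have eq: "T (Suc k) = (\<lambda>x. act (enum (LEAST i. minF k x = act (enum i) x)) x)"
    using LeastI_ex[OF ex] by (auto simp: fun_eq_iff)
  have "(\<lambda>x. LEAST i. minF k x = act (enum i) x) \<in> borel \<rightarrow>\<^sub>M count_space UNIV"
    by (rule measurable_Least) (rule minF_pred[OF enum_in])
  then have "(\<lambda>x. (\<lambda>i x. act (enum i) x) (LEAST i. minF k x = act (enum i) x) x) \<in> borel_measurable borel"
    by (rule measurable_compose_countable[rotated]) simp
  then show ?thesis using Suc eq by simp
qed

lemma bidx_meas: "bidx n \<in> borel \<rightarrow>\<^sub>M count_space UNIV"
proof -
  have "Measurable.pred borel (\<lambda>x. act (inv (enum i)) (T n x) = T (Suc n) x)" for i
    unfolding pred_def by (rule measurable_equality_set) measurable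
  then have "(\<lambda>x. LEAST i. act (inv (enum i)) (T n x) = T (Suc n) x) \<in> borel \<rightarrow>\<^sub>M count_space UNIV"
    by (rule measurable_Least)
  then show ?thesis unfolding bidx_def[abs_def] .
qed

lemma a_meas: "a n \<in> borel \<rightarrow>\<^sub>M count_space UNIV"
proof (induction n)
  case 0
  have "a 0 = (\<lambda>x. enum (bidx 0 x))" by (auto simp: b_def fun_eq_iff)
  then show ?case using measurable_compose[OF bidx_meas measurable_count_space] by simp
next
  case (Suc n)
  have "a (Suc n) = (\<lambda>x. (\<lambda>i x. a n x \<otimes> enum i) (bidx (Suc n) x) x)" by (auto simp: b_def fun_eq_iff)
  moreover have "(\<lambda>x. (\<lambda>i x. a n x \<otimes> enum i) (bidx (Suc n) x) x) \<in> borel \<rightarrow>\<^sub>M count_space UNIV"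
  proof (rule measurable_compose_countable[OF _ bidx_meas])
    fix i
    show "(\<lambda>x. a n x \<otimes> enum i) \<in> borel \<rightarrow>\<^sub>M count_space UNIV"
      using measurable_compose[OF Suc.IH measurable_count_space, of "\<lambda>g. g \<otimes> enum i"] by simp
  qed
  ultimately show ?case by simp
qed

lemma a_level[measurable]: "{x. a n x = g} \<in> sets borel"
proof -
  have "a n -` {g} \<inter> space borel \<in> sets borel" by (rule measurable_sets[OF a_meas]) simp
  then show ?thesis by (simp add: vimage_def)
qed

lemma d_sets: assumes h: "h \<in> carrier H" shows "{p. d n (fst p) (snd p) = h} \<in> sets (borel \<Otimes>\<^sub>M borel)"
proof -
  interpret G: group H by (rule grp)
  have iff: "d n x y = h \<longleftrightarrow> a n y = inv h \<otimes> a n x" for x y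
  proof -
    have "d n x y = h \<longleftrightarrow> a n x = h \<otimes> a n y" unfolding d_def using h by (simp add: G.inv_solve_right')
    also have "\<dots> \<longleftrightarrow> a n y = inv h \<otimes> a n x" using h by (simp add: G.inv_solve_left)
    finally show ?thesis .
  qed
  have eq: "{p. d n (fst p) (snd p) = h} = (\<Union>i. {x. a n x = enum i} \<times> {y. a n y = inv h \<otimes> enum i})"
  proof (rule equalityI[OF subsetI subsetI])
    fix p assume "p \<in> {p. d n (fst p) (snd p) = h}"
    moreover obtain i where "enum i = a n (fst p)" using enum_surj[OF a_carr] by blast
    ultimately show "p \<in> (\<Union>i. {x. a n x = enum i} \<times> {y. a n y = inv h \<otimes> enum i})"
      using iff by (cases p) (auto, metis)
  next
    fix p assume "p \<in> (\<Union>i. {x. a n x = enum i} \<times> {y. a n y = inv h \<otimes> enum i})"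
    then show "p \<in> {p. d n (fst p) (snd p) = h}" using iff by (cases p) auto
  qed
  have "(\<Union>i. {x. a n x = enum i} \<times> {y. a n y = inv h \<otimes> enum i}) \<in> sets (borel \<Otimes>\<^sub>M borel)"
    by (intro sets.countable_nat_UN subsetI) (auto intro!: pair_measureI)
  then show ?thesis using eq by simp
qed

lemma R_sets: "R \<in> sets (borel \<Otimes>\<^sub>M borel)"
  using un[symmetric] Fm by (metis sets.countable_nat_UN image_subset_iff)

lemma c_R: "p \<in> R \<Longrightarrow> \<exists>n. p \<in> F n"
  using un by blast

lemma c_meas: "c \<in> restrict_space (borel \<Otimes>\<^sub>M borel) R \<rightarrow>\<^sub>M count_space (carrier H)"
proof -
  have sp: "space (restrict_space (borel \<Otimes>\<^sub>M borel) R) = R" by (simp add: space_restrict_space space_pair_measure)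
  have "c -` {h} \<inter> R \<in> sets (restrict_space (borel \<Otimes>\<^sub>M borel) R)" if h: "h \<in> carrier H" for h
  proof -
    have eq: "c -` {h} \<inter> R = R \<inter> (\<Union>n. F n \<inter> {p. d n (fst p) (snd p) = h})"
    proof (rule equalityI[OF subsetI subsetI])
      fix p assume p: "p \<in> c -` {h} \<inter> R"
      then obtain n where "p \<in> F n" using c_R by blast
      then show "p \<in> R \<inter> (\<Union>n. F n \<inter> {p. d n (fst p) (snd p) = h})" using p c_eq by (cases p) auto
    next
      fix p assume "p \<in> R \<inter> (\<Union>n. F n \<inter> {p. d n (fst p) (snd p) = h})"
      then show "p \<in> c -` {h} \<inter> R" using c_eq by (cases p) auto
    qed
    have "(\<Union>n. F n \<inter> {p. d n (fst p) (snd p) = h}) \<in> sets (borel \<Otimes>\<^sub>M borel)"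
      using Fm d_sets[OF h] by (intro sets.countable_nat_UN) auto
    then show ?thesis unfolding eq sets_restrict_space by blast
  qed
  moreover have "c \<in> R \<rightarrow> carrier H" unfolding c_def by simp
  ultimately show ?thesis unfolding measurable_count_space_eq_countable[OF cnt] sp by blast
qed

lemma main: "\<exists>\<sigma>. \<sigma> \<in> measurable (restrict_space (borel \<Otimes>\<^sub>M borel) R)
                           (borel \<Otimes>\<^sub>M count_space (carrier H))
           \<and> groupoid_hom_rel_ag H act R \<sigma>
           \<and> (\<forall>p \<in> R. quot_map H act (\<sigma> p) = p)"
proof (intro exI conjI)
  let ?s = "\<lambda>p. (fst p, c p)"
  show "?s \<in> measurable (restrict_space (borel \<Otimes>\<^sub>M borel) R) (borel \<Otimes>\<^sub>M count_space (carrier H))"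
    by (intro measurable_Pair measurable_restrict_space1 measurable_fst c_meas)
  show "groupoid_hom_rel_ag H act R ?s"
    unfolding groupoid_hom_rel_ag_def
  proof (intro conjI ballI allI impI)
    fix p assume "p \<in> R" then show "?s p \<in> action_groupoid H"
      unfolding action_groupoid_def c_def by simp
  next
    fix x y z assume xy: "(x,y) \<in> R" and yz: "(y,z) \<in> R"
    obtain n1 n2 where "(x,y) \<in> F n1" "(y,z) \<in> F n2" using c_R xy yz by blast
    then have 1: "(x,y) \<in> F (max n1 n2)" and 2: "(y,z) \<in> F (max n1 n2)" using F_mono[OF max.cobounded1] F_mono[OF max.cobounded2] by auto
    have 3: "(x,z) \<in> F (max n1 n2)" using F_trans[OF 1 2] .
    show "ag_source H act (?s (x, y)) = ag_range (?s (y, z))"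
      unfolding ag_source_def ag_range_def using c_eq[OF 1] d_act[OF 1] by simp
    show "?s (x, z) = ag_mult H (?s (x, y)) (?s (y, z))"
      unfolding ag_mult_def using c_eq[OF 1] c_eq[OF 2] c_eq[OF 3] d_cocycle by simp
  qed
  show "\<forall>p\<in>R. quot_map H act (?s p) = p"
  proof
    fix p assume "p \<in> R"
    then obtain n where n: "p \<in> F n" using c_R by blast
    obtain x y where p: "p = (x,y)" by (cases p)
    show "quot_map H act (?s p) = p"
      unfolding quot_map_def p using c_eq[OF n[unfolded p]] d_act[OF n[unfolded p]] by simp
  qed
qed

end

theorem lemma5p1:
  fixes H :: "('g, 'm) monoid_scheme" and E :: "'g set"
    and act :: "'g \<Rightarrow> 'x::polish_space \<Rightarrow> 'x"
  assumes "group H"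
    and "countable (carrier H)"
    and "E \<lhd> H"
    and "group_action H UNIV act"
    and "\<forall>h \<in> carrier H. act h \<in> borel_measurable borel"
    and "\<forall>e \<in> E. \<forall>x. act e x = x"
    and "hyperfinite (orbit_rel H act)"
  shows "\<exists>\<sigma>. \<sigma> \<in> measurable (restrict_space (borel \<Otimes>\<^sub>M borel) (orbit_rel H act))
                           (borel \<Otimes>\<^sub>M count_space (carrier H))
           \<and> groupoid_hom_rel_ag H act (orbit_rel H act) \<sigma>
           \<and> (\<forall>p \<in> orbit_rel H act. quot_map H act (\<sigma> p) = p)"
proof -
  obtain F :: "nat \<Rightarrow> ('x \<times> 'x) set" where F: "incseq F \<and> (\<Union>n. F n) = orbit_rel H act \<and>
        (\<forall>n. F n \<in> sets (borel \<Otimes>\<^sub>M borel) \<and> equiv UNIV (F n) \<and> (\<forall>x. finite (F n `` {x})))"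
    using assms(7) unfolding hyperfinite_def by (elim exE) (rule that)
  obtain B :: "nat \<Rightarrow> 'x set" where B: "(\<forall>i. open (B i)) \<and> (\<forall>x y. x \<noteq> y \<longrightarrow> (\<exists>i. (x \<in> B i) \<noteq> (y \<in> B i)))"
    using sep_basis_ex by (elim exE) (rule that)
  have hf: "hf H act F B"
  proof (rule hf.intro)
    show "group H" by (rule assms(1))
    show "countable (carrier H)" by (rule assms(2))
    show "group_action H UNIV act" by (rule assms(4))
    show "\<And>h. h \<in> carrier H \<Longrightarrow> act h \<in> borel_measurable borel" using assms(5) by blast
    show "incseq F" using F by blast
    show "(\<Union>n. F n) = orbit_rel H act" using F by blast
    show "\<And>n. F n \<in> sets (borel \<Otimes>\<^sub>M borel)" using F by blast
    show "\<And>n. equiv UNIV (F n)" using F by blast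
    show "\<And>n x. finite (F n `` {x})" using F by blast
    show "\<And>i. open (B i)" using B by blast
    show "\<And>x y. x \<noteq> y \<Longrightarrow> \<exists>i. (x \<in> B i) \<noteq> (y \<in> B i)" using B by blast
  qed
  show ?thesis by (rule hf.main[OF hf])
qed

end
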